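(* Let $X$ be a real Banach space and $G$ an amenable Hausdorff topological group which is locally compact or SIN, acting continuously on $X$ by affine isometries, and let $M$ be a bi-invariant mean on $G$. Suppose $Q:X^{**}\to X^{**}$ is a bounded linear projection with $Q[X^{**}]=\kappa_X(X)$ such that $\pi(g)\zeta\in\ker Q$ for all $g\in G$ and $\zeta\in\ker Q$. Let $R_G:X\to X^{**}$, $R_G(x)(x^* )=M(g\mapsto x^*(\pi(g)x))$, and $I_G=\{x\in X:\pi(g)x=x\ \forall g\in G\}$. Then $P_G:=\kappa_X^{-1}\circ Q\circ R_G:X\to X$ is a projection of norm at most $\|Q\|$ with $P_G[X]=I_G$, and $\kappa_X(P_G[X])$ is a complemented subspace of $R_G[X]$ (complemented by the restriction of $Q$). Moreover, if some (equivalently every) orbit of the affine action is bounded, then $P_G(gx)=P_G(x)$ for all $g\in G$, $x\in X$.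
   Context: $\kappa_X:X\to X^{**}$ is the canonical embedding. For an action by affine isometries $(g,x)\mapsto gx$, $\pi(g)x:=gx-g0$ is its linear part (an action by linear isometries); the dual actions are $(\pi(g)x^* )(x)=x^*(\pi(g^{-1})x)$ on $X^*$ and $(\pi(g)\zeta)(x^* )=\zeta(\pi(g^{-1})x^* )$ on $X^{**}$. $G$ is amenable if it admits a left-invariant mean on the bounded left-uniformly continuous functions; a bi-invariant mean is a positive linear functional $M$ with $M(1)=1$ invariant under both left and right translations, defined on the bounded uniformly (left and right) continuous functions when $G$ is SIN and on $L_\infty(G)$ (w.r.t. Haar measure) when $G$ is locally compact. $G$ is SIN if every neighborhood $U$ of $e$ contains a neighborhood $V$ of $e$ with $gVg^{-1}=V$ for all $g$. *)

theory Defs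
  imports "HOL-Analysis.Analysis" "HOL-Probability.Probability"
begin

(* Groups: a Hausdorff topological group is a type of class
   {topological_group_add, t2_space}; the group law is written additively
   (it is NOT assumed commutative), identity 0, inverse uminus. *)

definition nbhd_of_zero :: "'g::topological_group_add set \<Rightarrow> bool" where
  "nbhd_of_zero U \<longleftrightarrow> (\<exists>W. open W \<and> 0 \<in> W \<and> W \<subseteq> U)"

definition SIN_group :: "'g::topological_group_add itself \<Rightarrow> bool" where
  "SIN_group _ \<longleftrightarrow>
     (\<forall>U::'g set. nbhd_of_zero U \<longrightarrow>
        (\<exists>V. nbhd_of_zero V \<and> V \<subseteq> U \<and> (\<forall>g. (\<lambda>v. g + v - g) ` V = V)))"

definition left_unif_cont :: "('g::topological_group_add \<Rightarrow> real) \<Rightarrow> bool" where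
  "left_unif_cont f \<longleftrightarrow>
     (\<forall>\<epsilon>>0. \<exists>U. nbhd_of_zero U \<and> (\<forall>h\<in>U. \<forall>x. \<bar>f (h + x) - f x\<bar> < \<epsilon>))"

definition right_unif_cont :: "('g::topological_group_add \<Rightarrow> real) \<Rightarrow> bool" where
  "right_unif_cont f \<longleftrightarrow>
     (\<forall>\<epsilon>>0. \<exists>U. nbhd_of_zero U \<and> (\<forall>h\<in>U. \<forall>x. \<bar>f (x + h) - f x\<bar> < \<epsilon>))"

definition LUCb :: "('g::topological_group_add \<Rightarrow> real) set" where
  "LUCb = {f. bounded (range f) \<and> left_unif_cont f}"

definition UCb :: "('g::topological_group_add \<Rightarrow> real) set" where
  "UCb = {f. bounded (range f) \<and> left_unif_cont f \<and> right_unif_cont f}"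

definition mean_on :: "('g \<Rightarrow> real) set \<Rightarrow> (('g \<Rightarrow> real) \<Rightarrow> real) \<Rightarrow> bool" where
  "mean_on D M \<longleftrightarrow>
     (\<forall>f\<in>D. \<forall>h\<in>D. \<forall>a b. M (\<lambda>x. a * f x + b * h x) = a * M f + b * M h) \<and>
     (\<forall>f\<in>D. (\<forall>x. 0 \<le> f x) \<longrightarrow> 0 \<le> M f) \<and>
     M (\<lambda>_. 1) = 1"

definition left_invariant_mean_on ::
  "('g::group_add \<Rightarrow> real) set \<Rightarrow> (('g \<Rightarrow> real) \<Rightarrow> real) \<Rightarrow> bool" where
  "left_invariant_mean_on D M \<longleftrightarrow> mean_on D M \<and>
     (\<forall>f\<in>D. \<forall>g. M (\<lambda>x. f (g + x)) = M f)"

definition bi_invariant_mean_on ::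
  "('g::group_add \<Rightarrow> real) set \<Rightarrow> (('g \<Rightarrow> real) \<Rightarrow> real) \<Rightarrow> bool" where
  "bi_invariant_mean_on D M \<longleftrightarrow> mean_on D M \<and>
     (\<forall>f\<in>D. \<forall>g. M (\<lambda>x. f (g + x)) = M f \<and> M (\<lambda>x. f (x + g)) = M f)"

definition amenable_group :: "'g::topological_group_add itself \<Rightarrow> bool" where
  "amenable_group _ \<longleftrightarrow> (\<exists>M. left_invariant_mean_on (LUCb :: ('g \<Rightarrow> real) set) M)"

definition left_haar_measure :: "'g::topological_group_add measure \<Rightarrow> bool" where
  "left_haar_measure \<mu> \<longleftrightarrow>
     sets \<mu> = sets borel \<and>
     (\<forall>A\<in>sets borel. \<forall>g. emeasure \<mu> ((\<lambda>x. g + x) ` A) = emeasure \<mu> A) \<and>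
     (\<forall>K. compact K \<longrightarrow> emeasure \<mu> K < \<infinity>) \<and>
     (\<forall>A\<in>sets borel. emeasure \<mu> A = (INF U\<in>{U. open U \<and> A \<subseteq> U}. emeasure \<mu> U)) \<and>
     (\<forall>U. open U \<longrightarrow> emeasure \<mu> U = (SUP K\<in>{K. compact K \<and> K \<subseteq> U}. emeasure \<mu> K)) \<and>
     emeasure \<mu> UNIV \<noteq> 0"

(* L_infinity(G): essentially bounded measurable functions; a functional on
   L_infinity (a space of a.e.-classes) is one that respects a.e. equality *)
definition Linf :: "'g measure \<Rightarrow> ('g \<Rightarrow> real) set" where
  "Linf \<mu> = {f. f \<in> borel_measurable \<mu> \<and> (\<exists>C. AE x in \<mu>. \<bar>f x\<bar> \<le> C)}"

definition bi_invariant_mean_Linf ::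
  "'g::topological_group_add measure \<Rightarrow> (('g \<Rightarrow> real) \<Rightarrow> real) \<Rightarrow> bool" where
  "bi_invariant_mean_Linf \<mu> M \<longleftrightarrow> bi_invariant_mean_on (Linf \<mu>) M \<and>
     (\<forall>f\<in>Linf \<mu>. \<forall>h\<in>Linf \<mu>. (AE x in \<mu>. f x = h x) \<longrightarrow> M f = M h)"

definition affine_isometric_action :: "('g::group_add \<Rightarrow> 'x::real_normed_vector \<Rightarrow> 'x) \<Rightarrow> bool" where
  "affine_isometric_action act \<longleftrightarrow>
     (\<forall>x. act 0 x = x) \<and>
     (\<forall>g h x. act (g + h) x = act g (act h x)) \<and>
     (\<forall>g x y. dist (act g x) (act g y) = dist x y) \<and>
     (\<forall>g x y t. act g ((1 - t) *\<^sub>R x + t *\<^sub>R y) = (1 - t) *\<^sub>R act g x + t *\<^sub>R act g y)"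

definition lin_part :: "('g \<Rightarrow> 'x::real_normed_vector \<Rightarrow> 'x) \<Rightarrow> 'g \<Rightarrow> 'x \<Rightarrow> 'x" where
  "lin_part act g x = act g x - act g 0"

definition dual_act :: "('g::group_add \<Rightarrow> 'x::real_normed_vector \<Rightarrow> 'x) \<Rightarrow> 'g
                          \<Rightarrow> ('x \<Rightarrow>\<^sub>L real) \<Rightarrow> ('x \<Rightarrow>\<^sub>L real)" where
  "dual_act act g xs = Blinfun (\<lambda>x. blinfun_apply xs (lin_part act (- g) x))"

definition bidual_act :: "('g::group_add \<Rightarrow> 'x::real_normed_vector \<Rightarrow> 'x) \<Rightarrow> 'g
                          \<Rightarrow> (('x \<Rightarrow>\<^sub>L real) \<Rightarrow>\<^sub>L real) \<Rightarrow> (('x \<Rightarrow>\<^sub>L real) \<Rightarrow>\<^sub>L real)" where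
  "bidual_act act g \<zeta> = Blinfun (\<lambda>xs. blinfun_apply \<zeta> (dual_act act (- g) xs))"

definition kappa :: "'x::real_normed_vector \<Rightarrow> (('x \<Rightarrow>\<^sub>L real) \<Rightarrow>\<^sub>L real)" where
  "kappa x = Blinfun (\<lambda>xs. blinfun_apply xs x)"

definition R_G :: "('g \<Rightarrow> 'x::real_normed_vector \<Rightarrow> 'x) \<Rightarrow> (('g \<Rightarrow> real) \<Rightarrow> real)
                     \<Rightarrow> 'x \<Rightarrow> (('x \<Rightarrow>\<^sub>L real) \<Rightarrow>\<^sub>L real)" where
  "R_G act M x = Blinfun (\<lambda>xs. M (\<lambda>g. blinfun_apply xs (lin_part act g x)))"

definition I_G :: "('g \<Rightarrow> 'x::real_normed_vector \<Rightarrow> 'x) \<Rightarrow> 'x set" where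
  "I_G act = {x. \<forall>g. lin_part act g x = x}"

definition P_G :: "('g \<Rightarrow> 'x::real_normed_vector \<Rightarrow> 'x) \<Rightarrow> (('g \<Rightarrow> real) \<Rightarrow> real)
       \<Rightarrow> ((('x \<Rightarrow>\<^sub>L real) \<Rightarrow>\<^sub>L real) \<Rightarrow>\<^sub>L (('x \<Rightarrow>\<^sub>L real) \<Rightarrow>\<^sub>L real)) \<Rightarrow> 'x \<Rightarrow> 'x" where
  "P_G act M Q x = inv kappa (blinfun_apply Q (R_G act M x))"

end

theory Submission
  imports Defs
begin


definition hbgood :: "'x::real_normed_vector \<Rightarrow> ('x \<times> real) set \<Rightarrow> bool" where
"hbgood x0 G \<longleftrightarrow> (\<forall>a r s. (a,r)\<in>G \<longrightarrow> (a,s)\<in>G \<longrightarrow> r=s) \<and> (0,0)\<in>G \<and>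
  (\<forall>a r b s. (a,r)\<in>G \<longrightarrow> (b,s)\<in>G \<longrightarrow> (a+b,r+s)\<in>G) \<and>
  (\<forall>a r c. (a,r)\<in>G \<longrightarrow> (c *\<^sub>R a, c*r) \<in> G) \<and>
  (\<forall>a r. (a,r)\<in>G \<longrightarrow> r \<le> norm a) \<and> (x0, norm x0) \<in> G"

lemma hb_extend:
  assumes hg: "hbgood x0 G" and y: "y \<notin> fst ` G"
  shows "\<exists>G'. hbgood x0 G' \<and> G \<subset> G'"
proof -
  have fnc: "(a,r)\<in>G \<Longrightarrow> (a,s)\<in>G \<Longrightarrow> r=s" for a r s using hg unfolding hbgood_def by blast
  have z: "(0,0)\<in>G" using hg unfolding hbgood_def by blast
  have ad: "(a,r)\<in>G \<Longrightarrow> (b,s)\<in>G \<Longrightarrow> (a+b,r+s)\<in>G" for a r b s using hg unfolding hbgood_def by blast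
  have sc: "(a,r)\<in>G \<Longrightarrow> (c *\<^sub>R a, c*r)\<in>G" for a r c using hg unfolding hbgood_def by blast
  have bd: "(a,r)\<in>G \<Longrightarrow> r \<le> norm a" for a r using hg unfolding hbgood_def by blast
  have x0: "(x0, norm x0) \<in> G" using hg unfolding hbgood_def by blast
  define S where "S = {r - norm (a - y) | a r. (a,r)\<in>G}"
  define c where "c = Sup S"
  have key: "r - norm (a - y) \<le> norm (b + y) - s" if "(a,r)\<in>G" "(b,s)\<in>G" for a r b s
  proof -
    have "r + s \<le> norm (a + b)" using bd[OF ad[OF that]] .
    also have "a + b = (a - y) + (b + y)" by simp
    also have "norm ((a - y) + (b + y)) \<le> norm (a - y) + norm (b + y)" by (rule norm_triangle_ineq)
    finally show ?thesis by simp
  qed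
  have Sne: "S \<noteq> {}" using z unfolding S_def by blast
  have Sbdd: "bdd_above S" unfolding S_def bdd_above_def using key[OF _ z] by fastforce
  have c_up: "r - norm (a - y) \<le> c" if "(a,r)\<in>G" for a r
    unfolding c_def by (rule cSup_upper[OF _ Sbdd]) (use that S_def in blast)
  have c_lo: "c \<le> norm (b + y) - s" if "(b,s)\<in>G" for b s
    unfolding c_def by (rule cSup_least[OF Sne]) (use key[OF _ that] S_def in blast)
  have dsub: "(a,r)\<in>G \<Longrightarrow> (b,s)\<in>G \<Longrightarrow> (a - b, r - s)\<in>G" for a r b s
    using ad[of a r "-b" "-s"] sc[of b s "-1"] by simp
  define G' where "G' = {(a + t *\<^sub>R y, r + t*c) | a r t. (a,r)\<in>G}"
  have memG': "(a,r)\<in>G \<Longrightarrow> (a + t *\<^sub>R y, r + t*c) \<in> G'" for a r t unfolding G'_def by blast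
  have bound: "r + t*c \<le> norm (a + t *\<^sub>R y)" if ar: "(a,r)\<in>G" for a r t
  proof (cases "t > 0")
    case True
    have "c \<le> norm (inverse t *\<^sub>R a + y) - inverse t * r" using c_lo[OF sc[OF ar, of "inverse t"]] .
    hence "t * c \<le> t * (norm (inverse t *\<^sub>R a + y) - inverse t * r)" using True
      by (intro mult_left_mono) auto
    also have "\<dots> = t * norm (inverse t *\<^sub>R a + y) - r" using True by (simp add: right_diff_distrib)
    also have "t * norm (inverse t *\<^sub>R a + y) = norm (t *\<^sub>R (inverse t *\<^sub>R a + y))" using True by simp
    also have "t *\<^sub>R (inverse t *\<^sub>R a + y) = a + t *\<^sub>R y" using True by (simp add: scaleR_add_right)
    finally show ?thesis by simp
  next
    case False
    show ?thesis
    proof (cases "t = 0")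
      case True then show ?thesis using bd[OF ar] by simp
    next
      case False
      define u where "u = - t"
      have u: "u > 0" using False \<open>\<not> t > 0\<close> u_def by simp
      have "inverse u * r - norm (inverse u *\<^sub>R a - y) \<le> c" using c_up[OF sc[OF ar, of "inverse u"]] .
      hence "u * (inverse u * r - norm (inverse u *\<^sub>R a - y)) \<le> u * c" using u
        by (intro mult_left_mono) auto
      moreover have "u * (inverse u * r) = r" using u by (metis mult.assoc right_inverse mult_1 less_irrefl)
      ultimately have "r - u * norm (inverse u *\<^sub>R a - y) \<le> u * c" by (simp add: right_diff_distrib)
      also have "u * norm (inverse u *\<^sub>R a - y) = norm (u *\<^sub>R (inverse u *\<^sub>R a - y))" using u by simp
      also have "u *\<^sub>R (inverse u *\<^sub>R a - y) = a + t *\<^sub>R y" using u by (simp add: scaleR_diff_right u_def)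
      finally show ?thesis using u_def by simp
    qed
  qed
  have good: "hbgood x0 G'"
    unfolding hbgood_def
  proof (intro conjI allI impI)
    fix p r s assume "(p,r)\<in>G'" "(p,s)\<in>G'"
    then obtain a r1 t b s1 t' where e: "p = a + t *\<^sub>R y" "r = r1 + t*c" "(a,r1)\<in>G"
      "p = b + t' *\<^sub>R y" "s = s1 + t'*c" "(b,s1)\<in>G" unfolding G'_def by blast
    have tt: "t = t'"
    proof (rule ccontr)
      assume ne: "t \<noteq> t'"
      have "(t' - t) *\<^sub>R y = a - b" using e by (simp add: algebra_simps)
      hence "inverse (t' - t) *\<^sub>R ((t' - t) *\<^sub>R y) = inverse (t' - t) *\<^sub>R (a - b)" by simp
      hence "y = inverse (t' - t) *\<^sub>R (a - b)" using ne by simp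
      moreover have "(inverse (t' - t) *\<^sub>R (a - b), inverse (t' - t) * (r1 - s1)) \<in> G"
        by (rule sc[OF dsub[OF e(3) e(6)]])
      ultimately show False using y by force
    qed
    hence "a = b" using e by simp
    hence "r1 = s1" using fnc e by blast
    thus "r = s" using e tt by simp
  next
    show "(0,0)\<in>G'" using memG'[OF z, of 0] by simp
  next
    fix p r q s assume "(p,r)\<in>G'" "(q,s)\<in>G'"
    then obtain a r1 t b s1 t' where e: "p = a + t *\<^sub>R y" "r = r1 + t*c" "(a,r1)\<in>G"
      "q = b + t' *\<^sub>R y" "s = s1 + t'*c" "(b,s1)\<in>G" unfolding G'_def by blast
    have "((a+b) + (t+t') *\<^sub>R y, (r1+s1) + (t+t')*c) \<in> G'" by (rule memG'[OF ad[OF e(3) e(6)]])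
    thus "(p+q, r+s)\<in>G'" using e by (simp add: algebra_simps)
  next
    fix p r d assume "(p,r)\<in>G'"
    then obtain a r1 t where e: "p = a + t *\<^sub>R y" "r = r1 + t*c" "(a,r1)\<in>G" unfolding G'_def by blast
    have "(d *\<^sub>R a + (d*t) *\<^sub>R y, d*r1 + (d*t)*c) \<in> G'" by (rule memG'[OF sc[OF e(3)]])
    thus "(d *\<^sub>R p, d*r)\<in>G'" using e by (simp add: algebra_simps)
  next
    fix p r assume "(p,r)\<in>G'"
    then obtain a r1 t where e: "p = a + t *\<^sub>R y" "r = r1 + t*c" "(a,r1)\<in>G" unfolding G'_def by blast
    thus "r \<le> norm p" using bound by simp
  next
    show "(x0, norm x0) \<in> G'" using memG'[OF x0, of 0] by simp
  qed
  have sub: "G \<subseteq> G'" using memG'[of _ _ 0] by force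
  have "(y, c) \<in> G'" using memG'[OF z, of 1] by simp
  moreover have "(y,c) \<notin> G" using y by force
  ultimately show ?thesis using good sub by blast
qed

lemma hb_max: "\<exists>G. hbgood (x0::'x::real_normed_vector) G \<and> fst ` G = UNIV"
proof -
  define A where "A = {G. hbgood x0 G}"
  define G0 where "G0 = {(c *\<^sub>R x0, c * norm x0) | c. True}"
  have "hbgood x0 G0" unfolding hbgood_def G0_def
  proof (intro conjI allI impI)
    fix a r s assume h: "(a, r) \<in> {(c *\<^sub>R x0, c * norm x0) |c. True}" "(a, s) \<in> {(c *\<^sub>R x0, c * norm x0) |c. True}"
    then obtain c d where "a = c *\<^sub>R x0" "r = c * norm x0" "a = d *\<^sub>R x0" "s = d * norm x0" by blast
    thus "r = s" by (cases "x0 = 0") auto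
  next
    show "(0,0) \<in> {(c *\<^sub>R x0, c * norm x0) |c. True}" by (rule CollectI, rule exI[of _ 0]) simp
  next
    fix a r b s assume "(a, r) \<in> {(c *\<^sub>R x0, c * norm x0) |c. True}" "(b, s) \<in> {(c *\<^sub>R x0, c * norm x0) |c. True}"
    then obtain c d where "a = c *\<^sub>R x0" "r = c * norm x0" "b = d *\<^sub>R x0" "s = d * norm x0" by blast
    thus "(a+b, r+s) \<in> {(c *\<^sub>R x0, c * norm x0) |c. True}"
      by (intro CollectI exI[of _ "c+d"]) (simp add: algebra_simps)
  next
    fix a r e assume "(a, r) \<in> {(c *\<^sub>R x0, c * norm x0) |c. True}"
    then obtain c where "a = c *\<^sub>R x0" "r = c * norm x0" by blast
    thus "(e *\<^sub>R a, e*r) \<in> {(c *\<^sub>R x0, c * norm x0) |c. True}"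
      by (intro CollectI exI[of _ "e*c"]) simp
  next
    fix a r assume "(a, r) \<in> {(c *\<^sub>R x0, c * norm x0) |c. True}"
    then obtain c where "a = c *\<^sub>R x0" "r = c * norm x0" by blast
    thus "r \<le> norm a" by (simp add: mult_right_mono)
  next
    show "(x0, norm x0) \<in> {(c *\<^sub>R x0, c * norm x0) |c. True}" by (intro CollectI exI[of _ 1]) simp
  qed
  hence ne: "A \<noteq> {}" unfolding A_def by blast
  have ch: "\<Union>C \<in> A" if Cne: "C \<noteq> {}" and Cch: "subset.chain A C" for C
  proof -
    have CA: "C \<subseteq> A" and lin: "\<And>X Y. X\<in>C \<Longrightarrow> Y\<in>C \<Longrightarrow> X \<subseteq> Y \<or> Y \<subseteq> X"
      using Cch unfolding subset.chain_def by auto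
    have gC: "X \<in> C \<Longrightarrow> hbgood x0 X" for X using CA A_def by blast
    have g1: "X\<in>C \<Longrightarrow> (a,r)\<in>X \<Longrightarrow> (a,s)\<in>X \<Longrightarrow> r=s" for X a r s
      using gC unfolding hbgood_def by metis
    have g2: "X\<in>C \<Longrightarrow> (0,0)\<in>X" for X using gC unfolding hbgood_def by metis
    have g3: "X\<in>C \<Longrightarrow> (a,r)\<in>X \<Longrightarrow> (b,s)\<in>X \<Longrightarrow> (a+b,r+s)\<in>X" for X a r b s
      using gC unfolding hbgood_def by metis
    have g4: "X\<in>C \<Longrightarrow> (a,r)\<in>X \<Longrightarrow> (e *\<^sub>R a, e*r)\<in>X" for X a r e
      using gC unfolding hbgood_def by metis
    have g5: "X\<in>C \<Longrightarrow> (a,r)\<in>X \<Longrightarrow> r \<le> norm a" for X a r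
      using gC unfolding hbgood_def by metis
    have g6: "X\<in>C \<Longrightarrow> (x0, norm x0)\<in>X" for X using gC unfolding hbgood_def by metis
    have two: "\<exists>X\<in>C. p \<in> X \<and> q \<in> X" if hp: "p \<in> \<Union>C" and hq: "q \<in> \<Union>C" for p q
    proof -
      obtain X Y where "X\<in>C" "Y\<in>C" "p\<in>X" "q\<in>Y" using hp hq by blast
      thus ?thesis using lin[of X Y] by blast
    qed
    obtain X1 where X1: "X1 \<in> C" using Cne by blast
    show ?thesis unfolding A_def mem_Collect_eq hbgood_def
    proof (intro conjI allI impI)
      fix a r s assume "(a, r) \<in> \<Union> C" "(a, s) \<in> \<Union> C"
      then obtain X where "X\<in>C" "(a,r)\<in>X" "(a,s)\<in>X" using two by blast
      thus "r = s" by (rule g1)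
    next
      show "(0,0) \<in> \<Union>C" using g2[OF X1] X1 by blast
    next
      fix a r b s assume "(a, r) \<in> \<Union> C" "(b, s) \<in> \<Union> C"
      then obtain X where "X\<in>C" "(a,r)\<in>X" "(b,s)\<in>X" using two by blast
      thus "(a+b, r+s) \<in> \<Union>C" using g3 by blast
    next
      fix a r e assume "(a, r) \<in> \<Union> C"
      then obtain X where "X\<in>C" "(a,r)\<in>X" by blast
      thus "(e *\<^sub>R a, e*r) \<in> \<Union>C" using g4 by blast
    next
      fix a r assume "(a, r) \<in> \<Union> C"
      then obtain X where "X\<in>C" "(a,r)\<in>X" by blast
      thus "r \<le> norm a" by (rule g5)
    next
      show "(x0, norm x0) \<in> \<Union>C" using g6[OF X1] X1 by blast
    qed
  qed
  obtain G where G: "G \<in> A" "\<forall>X\<in>A. G \<subseteq> X \<longrightarrow> X = G"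
    using subset_Zorn_nonempty[OF ne ch] by blast
  have hG: "hbgood x0 G" using G(1) unfolding A_def by simp
  have "fst ` G = UNIV"
  proof (rule ccontr)
    assume "fst ` G \<noteq> UNIV"
    then obtain y where y: "y \<notin> fst ` G" by blast
    obtain G' where G': "hbgood x0 G'" "G \<subset> G'" using hb_extend[OF hG y] by blast
    have "G' \<in> A" using G'(1) unfolding A_def by simp
    hence "G' = G" using G(2) G'(2) by blast
    thus False using G'(2) by simp
  qed
  thus ?thesis using hG by blast
qed

lemma hahn_banach_norm: "\<exists>f::'x::real_normed_vector \<Rightarrow>\<^sub>L real. blinfun_apply f x0 = norm x0 \<and> norm f \<le> 1"
proof -
  obtain G where G: "hbgood x0 G" "fst ` G = UNIV" using hb_max by blast
  have fnc: "(a,r)\<in>G \<Longrightarrow> (a,s)\<in>G \<Longrightarrow> r=s" for a r s using G unfolding hbgood_def by blast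
  have ad: "(a,r)\<in>G \<Longrightarrow> (b,s)\<in>G \<Longrightarrow> (a+b,r+s)\<in>G" for a r b s using G unfolding hbgood_def by blast
  have sc: "(a,r)\<in>G \<Longrightarrow> (c *\<^sub>R a, c*r)\<in>G" for a r c using G unfolding hbgood_def by blast
  have bd: "(a,r)\<in>G \<Longrightarrow> r \<le> norm a" for a r using G unfolding hbgood_def by blast
  have x0: "(x0, norm x0) \<in> G" using G unfolding hbgood_def by blast
  define fh where "fh z = (THE r. (z,r)\<in>G)" for z
  have inG: "(z, fh z) \<in> G" for z
  proof -
    have "z \<in> fst ` G" using G(2) by simp
    then obtain p where p: "p \<in> G" "z = fst p" by blast
    obtain r where "(z,r)\<in>G" using p by (intro that[of "snd p"]) simp
    hence "\<exists>!r. (z,r)\<in>G" using fnc by blast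
    from theI'[OF this] show ?thesis unfolding fh_def .
  qed
  have fval: "(z,r)\<in>G \<Longrightarrow> fh z = r" for z r using fnc inG by blast
  have add: "fh (a+b) = fh a + fh b" for a b using fval[OF ad[OF inG inG]] .
  have scl: "fh (c *\<^sub>R a) = c * fh a" for a c using fval[OF sc[OF inG]] .
  have nb: "\<bar>fh z\<bar> \<le> norm z" for z
  proof -
    have "fh z \<le> norm z" using bd[OF inG] .
    moreover have "fh (-z) \<le> norm (-z)" using bd[OF inG] .
    moreover have "fh (-z) = - fh z" using scl[of "-1" z] by simp
    ultimately show ?thesis by simp
  qed
  have bl: "bounded_linear fh"
    by (rule bounded_linear_intro[of _ 1]) (use add scl nb in auto)
  have ap: "blinfun_apply (Blinfun fh) = fh" by (rule bounded_linear_Blinfun_apply[OF bl])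
  have n1: "norm (Blinfun fh) \<le> 1"
  proof (rule norm_blinfun_bound)
    fix z show "norm (blinfun_apply (Blinfun fh) z) \<le> 1 * norm z" using nb[of z] ap by simp
  qed simp
  have "blinfun_apply (Blinfun fh) x0 = norm x0" using ap fval[OF x0] by simp
  thus ?thesis using n1 by blast
qed



context
  fixes act :: "'g::group_add \<Rightarrow> 'x::real_normed_vector \<Rightarrow> 'x"
  assumes act: "affine_isometric_action act"
begin

lemma act0: "act 0 x = x" and act_comp: "act (g + h) x = act g (act h x)"
  and act_dist: "dist (act g x) (act g y) = dist x y"
  and act_aff: "act g ((1 - t) *\<^sub>R x + t *\<^sub>R y) = (1 - t) *\<^sub>R act g x + t *\<^sub>R act g y"
  using act unfolding affine_isometric_action_def by blast+

lemma lp_scale: "lin_part act g (c *\<^sub>R x) = c *\<^sub>R lin_part act g x"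
  using act_aff[of g c 0 x] by (simp add: lin_part_def algebra_simps)

lemma lp_add: "lin_part act g (x + y) = lin_part act g x + lin_part act g y"
proof -
  have hh: "(1/2) *\<^sub>R v + (1/2) *\<^sub>R v = v" for v :: 'x
    by (metis scaleR_add_left field_sum_of_halves scaleR_one)
  have e1: "lin_part act g ((1/2) *\<^sub>R x + (1/2) *\<^sub>R y) = (1/2) *\<^sub>R lin_part act g x + (1/2) *\<^sub>R lin_part act g y"
    using act_aff[of g "1/2" x y] hh[of "act g 0"] by (simp add: lin_part_def algebra_simps scaleR_add_right)
  have e2: "lin_part act g ((1/2) *\<^sub>R x + (1/2) *\<^sub>R y) = (1/2) *\<^sub>R lin_part act g (x+y)"
    by (metis scaleR_add_right lp_scale)
  from e1 e2 have "(1/2) *\<^sub>R lin_part act g (x + y) = (1/2) *\<^sub>R (lin_part act g x + lin_part act g y)"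
    by (simp add: scaleR_add_right)
  thus ?thesis by simp
qed

lemma lp_norm: "norm (lin_part act g x) = norm x"
  using act_dist[of g x 0] by (simp add: lin_part_def dist_norm)

lemma lp_bl: "bounded_linear (lin_part act g)"
  by (rule bounded_linear_intro[of _ 1]) (auto simp: lp_add lp_scale lp_norm)

lemma lp_diff: "lin_part act g (x - y) = lin_part act g x - lin_part act g y"
  using linear_diff[OF bounded_linear.linear[OF lp_bl]] .

lemma lp_comp: "lin_part act (g + h) x = lin_part act g (lin_part act h x)"
proof -
  have "lin_part act g (lin_part act h x) = lin_part act g (act h x - act h 0)"
    by (simp only: lin_part_def[of act h x])
  also have "\<dots> = lin_part act g (act h x) - lin_part act g (act h 0)" by (rule lp_diff)
  also have "\<dots> = lin_part act (g+h) x" by (simp add: lin_part_def act_comp)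
  finally show ?thesis by simp
qed

lemma lp_zero: "lin_part act 0 x = x"
  by (simp add: lin_part_def act0)

lemma act_decomp: "act g x = lin_part act g x + act g 0"
  by (simp add: lin_part_def)

lemma lp_orbit: "lin_part act h (act g 0) = act (h + g) 0 - act h 0"
  by (simp add: lin_part_def act_comp)

end

locale meanD =
  fixes D :: "('g::group_add \<Rightarrow> real) set" and M :: "('g \<Rightarrow> real) \<Rightarrow> real"
  assumes bim: "bi_invariant_mean_on D M"
    and D_lin: "\<And>f h a b. f \<in> D \<Longrightarrow> h \<in> D \<Longrightarrow> (\<lambda>x. a * f x + b * h x) \<in> D"
    and D_one: "(\<lambda>_. 1) \<in> D"
begin

lemma Mlin: "f \<in> D \<Longrightarrow> h \<in> D \<Longrightarrow> M (\<lambda>x. a * f x + b * h x) = a * M f + b * M h"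
  using bim unfolding bi_invariant_mean_on_def mean_on_def by blast

lemma Mpos: "f \<in> D \<Longrightarrow> (\<And>x. 0 \<le> f x) \<Longrightarrow> 0 \<le> M f"
  using bim unfolding bi_invariant_mean_on_def mean_on_def by blast

lemma M1: "M (\<lambda>_. 1) = 1"
  using bim unfolding bi_invariant_mean_on_def mean_on_def by blast

lemma Mleft: "f \<in> D \<Longrightarrow> M (\<lambda>x. f (g + x)) = M f"
  using bim unfolding bi_invariant_mean_on_def by blast

lemma Mright: "f \<in> D \<Longrightarrow> M (\<lambda>x. f (x + g)) = M f"
  using bim unfolding bi_invariant_mean_on_def by blast

lemma Mconst: "M (\<lambda>_. c) = c"
  using Mlin[OF D_one D_one, of c 0] M1 by simp

lemma Mbound:
  assumes f: "f \<in> D" and b: "\<And>x. \<bar>f x\<bar> \<le> C"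
  shows "\<bar>M f\<bar> \<le> C"
proof -
  have d1: "(\<lambda>x. C * 1 + (-1) * f x) \<in> D" by (rule D_lin[OF D_one f])
  have d2: "(\<lambda>x. C * 1 + 1 * f x) \<in> D" by (rule D_lin[OF D_one f])
  have "0 \<le> M (\<lambda>x. C * 1 + (-1) * f x)"
    by (rule Mpos[OF d1]) (use b in \<open>smt (verit) abs_le_iff\<close>)
  moreover have "M (\<lambda>x. C * 1 + (-1) * f x) = C - M f" using Mlin[OF D_one f, of C "-1"] M1 by simp
  moreover have "0 \<le> M (\<lambda>x. C * 1 + 1 * f x)"
    by (rule Mpos[OF d2]) (use b in \<open>smt (verit) abs_le_iff\<close>)
  moreover have "M (\<lambda>x. C * 1 + 1 * f x) = C + M f" using Mlin[OF D_one f, of C "1"] M1 by simp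
  ultimately show ?thesis by linarith
qed

end



lemma kappa_apply: "blinfun_apply (kappa x) xs = blinfun_apply xs x"
  unfolding kappa_def by (simp add: bounded_linear_Blinfun_apply[OF blinfun.bounded_linear_left])

lemma norm_kappa: "norm (kappa (x::'x::real_normed_vector)) = norm x"
proof (rule antisym)
  show "norm (kappa x) \<le> norm x"
    by (rule norm_blinfun_bound) (auto simp: kappa_apply, metis norm_blinfun mult.commute real_norm_def)
  obtain f :: "'x \<Rightarrow>\<^sub>L real" where f: "blinfun_apply f x = norm x" "norm f \<le> 1"
    using hahn_banach_norm by blast
  have "norm x = norm (blinfun_apply (kappa x) f)" using f by (simp add: kappa_apply)
  also have "\<dots> \<le> norm (kappa x) * norm f" by (rule norm_blinfun)
  also have "\<dots> \<le> norm (kappa x)" using f(2) by (simp add: mult_left_le)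
  finally show "norm x \<le> norm (kappa x)" .
qed

lemma kappa_diff: "kappa (x - y) = kappa x - kappa y"
  by (rule blinfun_eqI) (simp add: kappa_apply blinfun.diff_right blinfun.diff_left)

lemma kappa_add: "kappa (x + y) = kappa x + kappa y"
  by (rule blinfun_eqI) (simp add: kappa_apply blinfun.add_right blinfun.add_left)

lemma kappa_scale: "kappa (c *\<^sub>R x) = c *\<^sub>R kappa x"
  by (rule blinfun_eqI) (simp add: kappa_apply blinfun.scaleR_right blinfun.scaleR_left)

lemma inj_kappa: "inj kappa"
proof (rule injI)
  fix x y :: "'x::real_normed_vector" assume "kappa x = kappa y"
  hence "norm (kappa (x - y)) = 0" by (simp add: kappa_diff)
  thus "x = y" by (simp add: norm_kappa)
qed

locale main_setting = meanD D M
  for D :: "('g::group_add \<Rightarrow> real) set" and M :: "('g \<Rightarrow> real) \<Rightarrow> real" +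
  fixes act :: "'g \<Rightarrow> 'x::banach \<Rightarrow> 'x"
    and Q :: "(('x \<Rightarrow>\<^sub>L real) \<Rightarrow>\<^sub>L real) \<Rightarrow>\<^sub>L (('x \<Rightarrow>\<^sub>L real) \<Rightarrow>\<^sub>L real)"
  assumes act: "affine_isometric_action act"
    and D_orb: "\<And>xs x. (\<lambda>g. blinfun_apply xs (lin_part act g x)) \<in> D"
    and Q_proj: "\<forall>\<zeta>. Q (Q \<zeta>) = Q \<zeta>"
    and Q_range: "range (blinfun_apply Q) = range kappa"
    and Q_ker: "\<forall>g \<zeta>. Q \<zeta> = 0 \<longrightarrow> Q (bidual_act act g \<zeta>) = 0"
begin

abbreviation "pp \<equiv> lin_part act"

lemma Rfun_bl: "bounded_linear (\<lambda>xs. M (\<lambda>g. blinfun_apply xs (pp g x)))"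
proof (rule bounded_linear_intro[of _ "norm x"])
  fix xs1 xs2 :: "'x \<Rightarrow>\<^sub>L real"
  have "M (\<lambda>g. 1 * blinfun_apply xs1 (pp g x) + 1 * blinfun_apply xs2 (pp g x)) =
        1 * M (\<lambda>g. blinfun_apply xs1 (pp g x)) + 1 * M (\<lambda>g. blinfun_apply xs2 (pp g x))"
    by (rule Mlin[OF D_orb D_orb])
  thus "M (\<lambda>g. blinfun_apply (xs1 + xs2) (pp g x)) =
        M (\<lambda>g. blinfun_apply xs1 (pp g x)) + M (\<lambda>g. blinfun_apply xs2 (pp g x))"
    by (simp add: blinfun.add_left)
next
  fix r :: real and xs :: "'x \<Rightarrow>\<^sub>L real"
  have "M (\<lambda>g. r * blinfun_apply xs (pp g x) + 0 * blinfun_apply xs (pp g x)) =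
        r * M (\<lambda>g. blinfun_apply xs (pp g x)) + 0 * M (\<lambda>g. blinfun_apply xs (pp g x))"
    by (rule Mlin[OF D_orb D_orb])
  thus "M (\<lambda>g. blinfun_apply (r *\<^sub>R xs) (pp g x)) = r *\<^sub>R M (\<lambda>g. blinfun_apply xs (pp g x))"
    by (simp add: blinfun.scaleR_left)
next
  fix xs :: "'x \<Rightarrow>\<^sub>L real"
  have "\<bar>M (\<lambda>g. blinfun_apply xs (pp g x))\<bar> \<le> norm xs * norm x"
  proof (rule Mbound[OF D_orb])
    fix g
    have "\<bar>blinfun_apply xs (pp g x)\<bar> \<le> norm xs * norm (pp g x)"
      using norm_blinfun[of xs "pp g x"] by simp
    thus "\<bar>blinfun_apply xs (pp g x)\<bar> \<le> norm xs * norm x" by (simp add: lp_norm[OF act])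
  qed
  thus "norm (M (\<lambda>g. blinfun_apply xs (pp g x))) \<le> norm xs * norm x" by simp
qed

lemma RG_apply: "blinfun_apply (R_G act M x) xs = M (\<lambda>g. blinfun_apply xs (pp g x))"
  unfolding R_G_def by (simp add: bounded_linear_Blinfun_apply[OF Rfun_bl])

lemma norm_RG: "norm (R_G act M x) \<le> norm x"
proof (rule norm_blinfun_bound)
  fix xs :: "'x \<Rightarrow>\<^sub>L real"
  have "\<bar>M (\<lambda>g. blinfun_apply xs (pp g x))\<bar> \<le> norm xs * norm x"
  proof (rule Mbound[OF D_orb])
    fix g
    have "\<bar>blinfun_apply xs (pp g x)\<bar> \<le> norm xs * norm (pp g x)"
      using norm_blinfun[of xs "pp g x"] by simp
    thus "\<bar>blinfun_apply xs (pp g x)\<bar> \<le> norm xs * norm x" by (simp add: lp_norm[OF act])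
  qed
  thus "norm (blinfun_apply (R_G act M x) xs) \<le> norm x * norm xs" by (simp add: RG_apply mult.commute)
qed simp

lemma RG_add: "R_G act M (x + y) = R_G act M x + R_G act M y"
proof (rule blinfun_eqI)
  fix xs :: "'x \<Rightarrow>\<^sub>L real"
  have "M (\<lambda>g. 1 * blinfun_apply xs (pp g x) + 1 * blinfun_apply xs (pp g y)) =
        1 * M (\<lambda>g. blinfun_apply xs (pp g x)) + 1 * M (\<lambda>g. blinfun_apply xs (pp g y))"
    by (rule Mlin[OF D_orb D_orb])
  thus "blinfun_apply (R_G act M (x + y)) xs = blinfun_apply (R_G act M x + R_G act M y) xs"
    by (simp add: RG_apply blinfun.add_left lp_add[OF act] blinfun.add_right)
qed

lemma RG_scale: "R_G act M (c *\<^sub>R x) = c *\<^sub>R R_G act M x"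
proof (rule blinfun_eqI)
  fix xs :: "'x \<Rightarrow>\<^sub>L real"
  have "M (\<lambda>g. c * blinfun_apply xs (pp g x) + 0 * blinfun_apply xs (pp g x)) =
        c * M (\<lambda>g. blinfun_apply xs (pp g x)) + 0 * M (\<lambda>g. blinfun_apply xs (pp g x))"
    by (rule Mlin[OF D_orb D_orb])
  thus "blinfun_apply (R_G act M (c *\<^sub>R x)) xs = blinfun_apply (c *\<^sub>R R_G act M x) xs"
    by (simp add: RG_apply lp_scale[OF act] blinfun.scaleR_right blinfun.scaleR_left)
qed

lemma RG_linear: "linear (R_G act M)"
  by (rule linearI) (simp_all add: RG_add RG_scale)

lemma dual_bl: "bounded_linear (\<lambda>y. blinfun_apply xs (pp g y))"
  by (rule bounded_linear_compose[OF blinfun.bounded_linear_right lp_bl[OF act]])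

lemma dual_apply: "blinfun_apply (dual_act act g xs) y = blinfun_apply xs (pp (- g) y)"
  unfolding dual_act_def by (simp add: bounded_linear_Blinfun_apply[OF dual_bl])

lemma dual_lin_bl: "bounded_linear (\<lambda>xs. dual_act act g xs)"
proof (rule bounded_linear_intro[of _ 1])
  fix a b show "dual_act act g (a + b) = dual_act act g a + dual_act act g b"
    by (rule blinfun_eqI) (simp add: dual_apply blinfun.add_left)
next
  fix r a show "dual_act act g (r *\<^sub>R a) = r *\<^sub>R dual_act act g a"
    by (rule blinfun_eqI) (simp add: dual_apply blinfun.scaleR_left)
next
  fix a :: "'x \<Rightarrow>\<^sub>L real"
  show "norm (dual_act act g a) \<le> norm a * 1"
  proof (rule norm_blinfun_bound)
    fix y show "norm (blinfun_apply (dual_act act g a) y) \<le> (norm a * 1) * norm y"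
      using norm_blinfun[of a "pp (-g) y"] by (simp add: dual_apply lp_norm[OF act])
  qed simp
qed

lemma bidual_apply: "blinfun_apply (bidual_act act g \<zeta>) xs = blinfun_apply \<zeta> (dual_act act (- g) xs)"
  unfolding bidual_act_def
  by (simp add: bounded_linear_Blinfun_apply[OF bounded_linear_compose[OF blinfun.bounded_linear_right dual_lin_bl]])

lemma bidual_diff: "bidual_act act g (a - b) = bidual_act act g a - bidual_act act g b"
  by (rule blinfun_eqI) (simp add: bidual_apply blinfun.diff_left)

lemma bidual_RG: "bidual_act act g (R_G act M x) = R_G act M x"
proof (rule blinfun_eqI)
  fix xs :: "'x \<Rightarrow>\<^sub>L real"
  have "blinfun_apply (bidual_act act g (R_G act M x)) xs = M (\<lambda>h. blinfun_apply xs (pp g (pp h x)))"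
    by (simp add: bidual_apply RG_apply dual_apply)
  also have "\<dots> = M (\<lambda>h. blinfun_apply xs (pp (g + h) x))" by (simp add: lp_comp[OF act])
  also have "\<dots> = M (\<lambda>h. blinfun_apply xs (pp h x))" by (rule Mleft[OF D_orb])
  finally show "blinfun_apply (bidual_act act g (R_G act M x)) xs = blinfun_apply (R_G act M x) xs"
    by (simp add: RG_apply)
qed

lemma bidual_kappa: "bidual_act act g (kappa y) = kappa (pp g y)"
  by (rule blinfun_eqI) (simp add: bidual_apply kappa_apply dual_apply)

lemma Q_comm: "Q (bidual_act act g \<zeta>) = Q (bidual_act act g (Q \<zeta>))"
proof -
  have "Q (\<zeta> - Q \<zeta>) = 0" using Q_proj by (simp add: blinfun.diff_right)
  hence "Q (bidual_act act g (\<zeta> - Q \<zeta>)) = 0" using Q_ker by blast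
  thus ?thesis by (simp add: bidual_diff blinfun.diff_right)
qed

lemma Q_kappa: "Q (kappa y) = kappa y"
proof -
  have "kappa y \<in> range (blinfun_apply Q)" using Q_range by blast
  then obtain z where "kappa y = Q z" by blast
  thus ?thesis using Q_proj by simp
qed

abbreviation "PP \<equiv> P_G act M Q"

lemma kappa_P: "kappa (PP x) = Q (R_G act M x)"
proof -
  have "Q (R_G act M x) \<in> range kappa" using Q_range by blast
  thus ?thesis unfolding P_G_def by (rule f_inv_into_f)
qed

lemma RG_inv: "x \<in> I_G act \<Longrightarrow> R_G act M x = kappa x"
  by (rule blinfun_eqI) (simp add: RG_apply kappa_apply I_G_def Mconst)

lemma P_fix: "x \<in> I_G act \<Longrightarrow> PP x = x"
proof -
  assume "x \<in> I_G act"
  hence "kappa (PP x) = kappa x" using kappa_P[of x] RG_inv[of x] Q_kappa[of x] by simp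
  thus ?thesis by (rule injD[OF inj_kappa])
qed

lemma P_inv: "PP x \<in> I_G act"
proof -
  have "pp g (PP x) = PP x" for g
  proof -
    have "kappa (pp g (PP x)) = bidual_act act g (Q (R_G act M x))"
      by (simp add: kappa_P bidual_kappa[symmetric])
    hence "Q (kappa (pp g (PP x))) = Q (bidual_act act g (R_G act M x))"
      using Q_comm[of g "R_G act M x"] by simp
    hence "kappa (pp g (PP x)) = kappa (PP x)" by (simp add: Q_kappa bidual_RG kappa_P)
    thus ?thesis by (rule injD[OF inj_kappa])
  qed
  thus ?thesis unfolding I_G_def by blast
qed

lemma P_add: "PP (x + y) = PP x + PP y"
proof -
  have "kappa (PP (x + y)) = kappa (PP x + PP y)"
    by (simp add: kappa_P kappa_add RG_add blinfun.add_right)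
  thus ?thesis by (rule injD[OF inj_kappa])
qed

lemma P_scale: "PP (c *\<^sub>R x) = c *\<^sub>R PP x"
proof -
  have "kappa (PP (c *\<^sub>R x)) = kappa (c *\<^sub>R PP x)"
    by (simp add: kappa_P kappa_scale RG_scale blinfun.scaleR_right)
  thus ?thesis by (rule injD[OF inj_kappa])
qed

lemma P_norm: "norm (PP x) \<le> norm Q * norm x"
proof -
  have "norm (PP x) = norm (Q (R_G act M x))" by (metis kappa_P norm_kappa)
  also have "\<dots> \<le> norm Q * norm (R_G act M x)" by (rule norm_blinfun)
  also have "\<dots> \<le> norm Q * norm x" by (rule mult_left_mono[OF norm_RG norm_ge_zero])
  finally show ?thesis .
qed

lemma main_conclusion:
  "bounded_linear PP \<and>
         (\<forall>x. PP (PP x) = PP x) \<and>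
         onorm PP \<le> norm Q \<and>
         range PP = I_G act \<and>
         subspace (range (R_G act M)) \<and>
         kappa ` range PP \<subseteq> range (R_G act M) \<and>
         blinfun_apply Q ` range (R_G act M) = kappa ` range PP"
proof (intro conjI allI)
  show "bounded_linear PP"
    by (rule bounded_linear_intro[of _ "norm Q"]) (auto simp: P_add P_scale, metis P_norm mult.commute)
  show "PP (PP x) = PP x" for x by (rule P_fix[OF P_inv])
  show "onorm PP \<le> norm Q" by (rule onorm_bound) (auto simp: P_norm)
  show "range PP = I_G act"
  proof
    show "range PP \<subseteq> I_G act" using P_inv by blast
    show "I_G act \<subseteq> range PP" using P_fix by (metis rangeI subsetI)
  qed
  show "subspace (range (R_G act M))"
    by (rule linear_subspace_image[OF RG_linear subspace_UNIV])
  show "kappa ` range PP \<subseteq> range (R_G act M)"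
  proof
    fix z assume "z \<in> kappa ` range PP"
    then obtain x where z: "z = kappa (PP x)" by blast
    have "z = R_G act M (PP x)" using RG_inv[OF P_inv] z by simp
    thus "z \<in> range (R_G act M)" by blast
  qed
  show "blinfun_apply Q ` range (R_G act M) = kappa ` range PP"
    by (auto simp: kappa_P image_iff)
qed

lemma bounded_orbit_conclusion:
  assumes Dk: "\<And>xs. (\<lambda>g. blinfun_apply xs (act g 0)) \<in> D"
  shows "PP (act g x) = PP x"
proof -
  have R1: "R_G act M (pp g x) = R_G act M x"
  proof (rule blinfun_eqI)
    fix xs :: "'x \<Rightarrow>\<^sub>L real"
    have "M (\<lambda>h. blinfun_apply xs (pp h (pp g x))) = M (\<lambda>h. blinfun_apply xs (pp (h + g) x))"
      by (simp add: lp_comp[OF act])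
    also have "\<dots> = M (\<lambda>h. blinfun_apply xs (pp h x))" by (rule Mright[OF D_orb])
    finally show "blinfun_apply (R_G act M (pp g x)) xs = blinfun_apply (R_G act M x) xs"
      by (simp add: RG_apply)
  qed
  have R2: "R_G act M (act g 0) = 0"
  proof (rule blinfun_eqI)
    fix xs :: "'x \<Rightarrow>\<^sub>L real"
    define k where "k = (\<lambda>h. blinfun_apply xs (act h 0))"
    have kD: "k \<in> D" unfolding k_def by (rule Dk)
    have e: "(\<lambda>h. blinfun_apply xs (pp h (act g 0))) = (\<lambda>h. k (h + g) - k h)"
      by (simp add: k_def lp_orbit[OF act] blinfun.diff_right)
    have fD: "(\<lambda>h. k (h + g) - k h) \<in> D" using D_orb[of xs "act g 0"] e by simp
    have "(\<lambda>h. 1 * (k (h + g) - k h) + 1 * k h) \<in> D" by (rule D_lin[OF fD kD])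
    hence kgD: "(\<lambda>h. k (h + g)) \<in> D" by simp
    have "M (\<lambda>h. 1 * k (h + g) + (-1) * k h) = 1 * M (\<lambda>h. k (h + g)) + (-1) * M k"
      by (rule Mlin[OF kgD kD])
    hence "M (\<lambda>h. k (h + g) - k h) = 0" using Mright[OF kD, of g] by simp
    thus "blinfun_apply (R_G act M (act g 0)) xs = blinfun_apply 0 xs"
      by (simp add: RG_apply e)
  qed
  have "R_G act M (act g x) = R_G act M x"
    using RG_add[of "pp g x" "act g 0"] R1 R2 act_decomp[OF act, of g x] by simp
  thus ?thesis unfolding P_G_def by simp
qed

end



lemma nbhd_inter: "nbhd_of_zero U \<Longrightarrow> nbhd_of_zero V \<Longrightarrow> nbhd_of_zero (U \<inter> V)"
  unfolding nbhd_of_zero_def by (meson Int_iff Int_mono open_Int)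

definition ucgen :: "('g \<Rightarrow> 'g \<Rightarrow> 'g) \<Rightarrow> ('g::topological_group_add \<Rightarrow> real) \<Rightarrow> bool" where
  "ucgen sh f \<longleftrightarrow> (\<forall>\<epsilon>>0. \<exists>U. nbhd_of_zero U \<and> (\<forall>h\<in>U. \<forall>x. \<bar>f (sh h x) - f x\<bar> < \<epsilon>))"

lemma ucgen_lin:
  assumes f: "ucgen sh f" and h: "ucgen sh k"
  shows "ucgen sh (\<lambda>x. a * f x + b * k x)"
  unfolding ucgen_def
proof (intro allI impI)
  fix \<epsilon> :: real assume e: "\<epsilon> > 0"
  define e1 where "e1 = \<epsilon> / (2 * (\<bar>a\<bar> + 1))"
  define e2 where "e2 = \<epsilon> / (2 * (\<bar>b\<bar> + 1))"
  have e1p: "e1 > 0" and e2p: "e2 > 0" using e unfolding e1_def e2_def by auto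
  obtain U1 where U1: "nbhd_of_zero U1" "\<forall>h\<in>U1. \<forall>x. \<bar>f (sh h x) - f x\<bar> < e1"
    using f e1p unfolding ucgen_def by blast
  obtain U2 where U2: "nbhd_of_zero U2" "\<forall>h\<in>U2. \<forall>x. \<bar>k (sh h x) - k x\<bar> < e2"
    using h e2p unfolding ucgen_def by blast
  have "\<bar>(a * f (sh h x) + b * k (sh h x)) - (a * f x + b * k x)\<bar> < \<epsilon>" if hU: "h \<in> U1 \<inter> U2" for h x
  proof -
    have "\<bar>(a * f (sh h x) + b * k (sh h x)) - (a * f x + b * k x)\<bar>
        \<le> \<bar>a\<bar> * \<bar>f (sh h x) - f x\<bar> + \<bar>b\<bar> * \<bar>k (sh h x) - k x\<bar>"
      by (simp add: abs_mult[symmetric] algebra_simps abs_triangle_ineq[of "a * f (sh h x) - a * f x" "b * k (sh h x) - b * k x", simplified])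
    also have "\<dots> \<le> \<bar>a\<bar> * e1 + \<bar>b\<bar> * e2"
      using U1(2) U2(2) hU by (intro add_mono mult_left_mono) (auto intro: less_imp_le)
    also have "\<bar>a\<bar> * e1 \<le> \<epsilon> / 2" using e unfolding e1_def by (simp add: field_simps)
    also have "\<bar>b\<bar> * e2 < \<epsilon> / 2" using e unfolding e2_def by (simp add: field_simps)
    finally show ?thesis by simp
  qed
  thus "\<exists>U. nbhd_of_zero U \<and> (\<forall>h\<in>U. \<forall>x. \<bar>(a * f (sh h x) + b * k (sh h x)) - (a * f x + b * k x)\<bar> < \<epsilon>)"
    using nbhd_inter[OF U1(1) U2(1)] by blast
qed

lemma left_ucgen: "left_unif_cont f = ucgen (\<lambda>h x. h + x) f"
  unfolding left_unif_cont_def ucgen_def by simp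
lemma right_ucgen: "right_unif_cont f = ucgen (\<lambda>h x. x + h) f"
  unfolding right_unif_cont_def ucgen_def by simp

lemma UCb_lin: "f \<in> UCb \<Longrightarrow> h \<in> UCb \<Longrightarrow> (\<lambda>x. a * f x + b * h x) \<in> UCb"
proof -
  assume f: "f \<in> UCb" and h: "h \<in> UCb"
  obtain B1 where B1: "\<And>x. \<bar>f x\<bar> \<le> B1" using f unfolding UCb_def bounded_iff by auto
  obtain B2 where B2: "\<And>x. \<bar>h x\<bar> \<le> B2" using h unfolding UCb_def bounded_iff by auto
  have "\<bar>a * f x + b * h x\<bar> \<le> \<bar>a\<bar> * B1 + \<bar>b\<bar> * B2" for x
  proof -
    have "\<bar>a * f x + b * h x\<bar> \<le> \<bar>a\<bar> * \<bar>f x\<bar> + \<bar>b\<bar> * \<bar>h x\<bar>"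
      by (metis abs_mult abs_triangle_ineq)
    also have "\<dots> \<le> \<bar>a\<bar> * B1 + \<bar>b\<bar> * B2" by (intro add_mono mult_left_mono B1 B2) auto
    finally show ?thesis .
  qed
  hence "bounded (range (\<lambda>x. a * f x + b * h x))" unfolding bounded_iff by auto
  thus ?thesis using f h unfolding UCb_def left_ucgen right_ucgen by (auto intro: ucgen_lin)
qed

lemma UCb_one: "(\<lambda>_. 1) \<in> UCb"
proof -
  have n: "nbhd_of_zero UNIV" unfolding nbhd_of_zero_def by auto
  show ?thesis unfolding UCb_def left_unif_cont_def right_unif_cont_def using n by auto
qed

lemma Linf_lin: "f \<in> Linf \<mu> \<Longrightarrow> h \<in> Linf \<mu> \<Longrightarrow> (\<lambda>x. a * f x + b * h x) \<in> Linf \<mu>"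
proof -
  assume f: "f \<in> Linf \<mu>" and h: "h \<in> Linf \<mu>"
  obtain C1 where C1: "AE x in \<mu>. \<bar>f x\<bar> \<le> C1" using f unfolding Linf_def by auto
  obtain C2 where C2: "AE x in \<mu>. \<bar>h x\<bar> \<le> C2" using h unfolding Linf_def by auto
  have "AE x in \<mu>. \<bar>a * f x + b * h x\<bar> \<le> \<bar>a\<bar> * C1 + \<bar>b\<bar> * C2"
    using C1 C2
  proof eventually_elim
    case (elim x)
    have "\<bar>a * f x + b * h x\<bar> \<le> \<bar>a\<bar> * \<bar>f x\<bar> + \<bar>b\<bar> * \<bar>h x\<bar>"
      by (metis abs_mult abs_triangle_ineq)
    also have "\<dots> \<le> \<bar>a\<bar> * C1 + \<bar>b\<bar> * C2" using elim by (intro add_mono mult_left_mono) auto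
    finally show ?case .
  qed
  moreover have "(\<lambda>x. a * f x + b * h x) \<in> borel_measurable \<mu>" using f h unfolding Linf_def by auto
  ultimately show ?thesis unfolding Linf_def by blast
qed

lemma Linf_one: "(\<lambda>_. 1) \<in> Linf \<mu>"
  unfolding Linf_def by auto

context
  fixes F :: "'g::{topological_group_add, t2_space} \<Rightarrow> 'x::real_normed_vector"
  assumes Fc: "continuous_on UNIV F" and Fb: "bounded (range F)"
    and Fs: "\<And>g h. norm (F (g + h) - F g) = norm (F h - F 0)"
begin

lemma F_Linf:
  fixes \<mu> :: "'g measure"
  assumes s: "sets \<mu> = sets borel"
  shows "(\<lambda>g. blinfun_apply xs (F g)) \<in> Linf \<mu>"
proof -
  have c: "continuous_on UNIV (\<lambda>g. blinfun_apply xs (F g))"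
    by (rule continuous_on_compose2[OF linear_continuous_on[OF blinfun.bounded_linear_right] Fc]) auto
  have m: "(\<lambda>g. blinfun_apply xs (F g)) \<in> borel_measurable \<mu>"
  proof -
    have "(borel_measurable \<mu> :: ('g \<Rightarrow> real) set) = borel_measurable borel" by (rule measurable_cong_sets[OF s refl])
    thus ?thesis using borel_measurable_continuous_onI[OF c] by simp
  qed
  obtain B where B: "\<And>g. norm (F g) \<le> B" using Fb unfolding bounded_iff by auto
  have "\<bar>blinfun_apply xs (F g)\<bar> \<le> norm xs * B" for g
    using norm_blinfun[of xs "F g"] B[of g] by (metis real_norm_def mult_left_mono norm_ge_zero order_trans)
  thus ?thesis using m unfolding Linf_def by blast
qed

lemma F_small:
  fixes \<epsilon> :: real and xs :: "'x \<Rightarrow>\<^sub>L real"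
  assumes e: "\<epsilon> > 0"
  shows "\<exists>U. nbhd_of_zero U \<and> (\<forall>h\<in>U. \<forall>g. \<bar>blinfun_apply xs (F (g + h)) - blinfun_apply xs (F g)\<bar> < \<epsilon>)"
proof -
  define \<delta> where "\<delta> = \<epsilon> / (norm xs + 1)"
  have np: "norm xs + 1 > 0" by (rule add_nonneg_pos[OF norm_ge_zero zero_less_one])
  have dp: "\<delta> > 0" using e np unfolding \<delta>_def by (rule divide_pos_pos)
  define U where "U = (\<lambda>h. F h - F 0) -` ball 0 \<delta>"
  have "continuous_on UNIV (\<lambda>h. F h - F 0)" by (intro continuous_intros Fc)
  hence oU: "open U" unfolding U_def by (intro open_vimage) auto
  have "0 \<in> U" unfolding U_def using dp by simp
  hence nU: "nbhd_of_zero U" using oU unfolding nbhd_of_zero_def by blast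
  have "\<bar>blinfun_apply xs (F (g + h)) - blinfun_apply xs (F g)\<bar> < \<epsilon>" if hU: "h \<in> U" for h g
  proof -
    have "\<bar>blinfun_apply xs (F (g + h)) - blinfun_apply xs (F g)\<bar> = \<bar>blinfun_apply xs (F (g + h) - F g)\<bar>"
      by (simp add: blinfun.diff_right)
    also have "\<dots> \<le> norm xs * norm (F (g + h) - F g)" using norm_blinfun by (metis real_norm_def)
    also have "\<dots> = norm xs * norm (F h - F 0)" by (simp add: Fs)
    also have "\<dots> \<le> norm xs * \<delta>" using hU unfolding U_def by (intro mult_left_mono) (auto simp: dist_norm norm_minus_commute)
    also have "\<dots> < \<epsilon>"
    proof -
      have "norm xs * \<delta> < (norm xs + 1) * \<delta>" using dp by simp
      also have "(norm xs + 1) * \<delta> = \<epsilon>" using np unfolding \<delta>_def by simp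
      finally show ?thesis .
    qed
    finally show ?thesis .
  qed
  thus ?thesis using nU by blast
qed

lemma F_UCb:
  assumes sin: "SIN_group TYPE('g)"
  shows "(\<lambda>g. blinfun_apply xs (F g)) \<in> UCb"
proof -
  have b: "bounded (range (\<lambda>g. blinfun_apply xs (F g)))"
  proof -
    have "bounded (blinfun_apply xs ` range F)"
      by (rule bounded_linear_image[OF Fb blinfun.bounded_linear_right])
    thus ?thesis by (simp add: image_image)
  qed
  have r: "right_unif_cont (\<lambda>g. blinfun_apply xs (F g))"
    unfolding right_unif_cont_def using F_small by blast
  have l: "left_unif_cont (\<lambda>g. blinfun_apply xs (F g))"
    unfolding left_unif_cont_def
  proof (intro allI impI)
    fix \<epsilon> :: real assume e: "\<epsilon> > 0"
    obtain U where U: "nbhd_of_zero U" "\<forall>h\<in>U. \<forall>g. \<bar>blinfun_apply xs (F (g + h)) - blinfun_apply xs (F g)\<bar> < \<epsilon>"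
      using F_small[OF e] by blast
    obtain V where V: "nbhd_of_zero V" "V \<subseteq> U" "\<And>g. (\<lambda>v. g + v - g) ` V = V"
      using sin U(1) unfolding SIN_group_def by blast
    have "\<bar>blinfun_apply xs (F (h + x)) - blinfun_apply xs (F x)\<bar> < \<epsilon>" if hV: "h \<in> V" for h x
    proof -
      have "(- x) + h - (- x) \<in> V" using V(3)[of "-x"] hV by blast
      hence "-x + h + x \<in> U" using V(2) by (simp add: diff_conv_add_uminus) blast
      hence "\<bar>blinfun_apply xs (F (x + (-x + h + x))) - blinfun_apply xs (F x)\<bar> < \<epsilon>" using U(2) by blast
      moreover have "x + (-x + h + x) = h + x" by (simp add: add.assoc[symmetric])
      ultimately show ?thesis by simp
    qed
    thus "\<exists>U. nbhd_of_zero U \<and> (\<forall>h\<in>U. \<forall>x. \<bar>blinfun_apply xs (F (h + x)) - blinfun_apply xs (F x)\<bar> < \<epsilon>)"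
      using V(1) by blast
  qed
  show ?thesis unfolding UCb_def using b l r by blast
qed

end



theorem theorem3p3:
  fixes act :: "'g::{topological_group_add, t2_space} \<Rightarrow> 'x::banach \<Rightarrow> 'x"
    and M :: "('g \<Rightarrow> real) \<Rightarrow> real"
    and Q :: "(('x \<Rightarrow>\<^sub>L real) \<Rightarrow>\<^sub>L real) \<Rightarrow>\<^sub>L (('x \<Rightarrow>\<^sub>L real) \<Rightarrow>\<^sub>L real)"
  assumes amen: "amenable_group TYPE('g)"
    and act: "affine_isometric_action act"
    and act_cont: "continuous_on UNIV (\<lambda>p. act (fst p) (snd p))"
    and mean: "(SIN_group TYPE('g) \<and> bi_invariant_mean_on UCb M) \<or>
               (locally_compact_space (euclidean :: 'g topology) \<and>
                (\<exists>\<mu>. left_haar_measure \<mu> \<and> bi_invariant_mean_Linf \<mu> M))"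
    and Q_proj: "\<forall>\<zeta>. Q (Q \<zeta>) = Q \<zeta>"
    and Q_range: "range (blinfun_apply Q) = range kappa"
    and Q_ker: "\<forall>g \<zeta>. Q \<zeta> = 0 \<longrightarrow> Q (bidual_act act g \<zeta>) = 0"
  shows "bounded_linear (P_G act M Q) \<and>
         (\<forall>x. P_G act M Q (P_G act M Q x) = P_G act M Q x) \<and>
         onorm (P_G act M Q) \<le> norm Q \<and>
         range (P_G act M Q) = I_G act \<and>
         subspace (range (R_G act M)) \<and>
         kappa ` range (P_G act M Q) \<subseteq> range (R_G act M) \<and>
         blinfun_apply Q ` range (R_G act M) = kappa ` range (P_G act M Q) \<and>
         ((\<exists>x. bounded (range (\<lambda>g. act g x))) \<longrightarrow>
            (\<forall>g x. P_G act M Q (act g x) = P_G act M Q x))"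
proof -
  have cy: "continuous_on UNIV (\<lambda>g. act g y)" for y
  proof -
    have "continuous_on UNIV (\<lambda>g. (\<lambda>p. act (fst p) (snd p)) (g, y))"
      by (rule continuous_on_compose2[OF act_cont]) (auto intro: continuous_intros)
    thus ?thesis by simp
  qed
  have F1c: "continuous_on UNIV (\<lambda>g. lin_part act g x)" for x
    unfolding lin_part_def by (intro continuous_on_diff cy)
  have F1b: "bounded (range (\<lambda>g. lin_part act g x))" for x
    unfolding bounded_iff using lp_norm[OF act] by auto
  have F1s: "norm (lin_part act (g + h) x - lin_part act g x) = norm (lin_part act h x - lin_part act 0 x)" for g h x
    by (simp add: lp_comp[OF act] lp_diff[OF act, symmetric] lp_norm[OF act] lp_zero[OF act])
  have F2c: "continuous_on UNIV (\<lambda>g. act g 0)" by (rule cy)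
  have F2s: "norm (act (g + h) 0 - act g 0) = norm (act h 0 - act 0 0)" for g h
    using lp_orbit[OF act, of g h] lp_norm[OF act, of g "act h 0"] by (simp add: act0[OF act])
  have F2b: "bounded (range (\<lambda>g. act g 0))" if hb: "\<exists>x. bounded (range (\<lambda>g. act g x))"
  proof -
    obtain x B where B: "\<And>g. norm (act g x) \<le> B" using hb unfolding bounded_iff by auto
    have "norm (act g 0) \<le> B + norm x" for g
    proof -
      have "norm (act g 0 - act g x) = norm x" using act_dist[OF act, of g 0 x] by (simp add: dist_norm)
      thus ?thesis using B[of g] norm_triangle_ineq[of "act g 0 - act g x" "act g x"] by simp
    qed
    thus ?thesis unfolding bounded_iff by auto
  qed
  have gen: ?thesis if mD: "meanD D M"
    and orb: "\<And>xs x. (\<lambda>g. blinfun_apply xs (lin_part act g x)) \<in> D"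
    and orb0: "(\<exists>x. bounded (range (\<lambda>g. act g x))) \<Longrightarrow> (\<And>xs. (\<lambda>g. blinfun_apply xs (act g 0)) \<in> D)"
    for D
  proof -
    interpret main_setting D M act Q
      by (rule main_setting.intro[OF mD main_setting_axioms.intro[OF act orb Q_proj Q_range Q_ker]])
    have A: "bounded_linear (P_G act M Q) \<and>
         (\<forall>x. P_G act M Q (P_G act M Q x) = P_G act M Q x) \<and>
         onorm (P_G act M Q) \<le> norm Q \<and>
         range (P_G act M Q) = I_G act \<and>
         subspace (range (R_G act M)) \<and>
         kappa ` range (P_G act M Q) \<subseteq> range (R_G act M) \<and>
         blinfun_apply Q ` range (R_G act M) = kappa ` range (P_G act M Q)"
      by (rule main_conclusion)
    have B: "(\<exists>x. bounded (range (\<lambda>g. act g x))) \<longrightarrow>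
            (\<forall>g x. P_G act M Q (act g x) = P_G act M Q x)"
    proof (intro impI allI)
      fix g x assume hb: "\<exists>x. bounded (range (\<lambda>g. act g x))"
      show "P_G act M Q (act g x) = P_G act M Q x"
        by (rule bounded_orbit_conclusion[OF orb0[OF hb]])
    qed
    from A B show ?thesis by (elim conjE) (intro conjI; assumption)
  qed
  from mean show ?thesis
  proof
    assume h: "SIN_group TYPE('g) \<and> bi_invariant_mean_on UCb M"
    have mD: "meanD UCb M" by (rule meanD.intro[OF _ UCb_lin UCb_one]) (use h in simp_all)
    show ?thesis
    proof (rule gen[OF mD])
      show "(\<lambda>g. blinfun_apply xs (lin_part act g x)) \<in> UCb" for xs x
        by (rule F_UCb[OF F1c F1b F1s]) (use h in auto)
      show "(\<lambda>g. blinfun_apply xs (act g 0)) \<in> UCb" if "\<exists>x. bounded (range (\<lambda>g. act g x))" for xs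
        by (rule F_UCb[OF F2c F2b[OF that] F2s]) (use h in auto)
    qed
  next
    assume h: "locally_compact_space (euclidean :: 'g topology) \<and>
                (\<exists>\<mu>. left_haar_measure \<mu> \<and> bi_invariant_mean_Linf \<mu> M)"
    then obtain \<mu> where mu: "left_haar_measure \<mu>" "bi_invariant_mean_Linf \<mu> M" by blast
    have s: "sets \<mu> = sets borel" using mu(1) unfolding left_haar_measure_def by (elim conjE)
    have mD: "meanD (Linf \<mu>) M"
      by (rule meanD.intro[OF _ Linf_lin Linf_one]) (use mu(2) in \<open>simp_all add: bi_invariant_mean_Linf_def\<close>)
    show ?thesis
    proof (rule gen[OF mD])
      show "(\<lambda>g. blinfun_apply xs (lin_part act g x)) \<in> Linf \<mu>" for xs x
        by (rule F_Linf[OF F1c F1b F1s s])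
      show "(\<lambda>g. blinfun_apply xs (act g 0)) \<in> Linf \<mu>" if "\<exists>x. bounded (range (\<lambda>g. act g x))" for xs
        by (rule F_Linf[OF F2c F2b[OF that] F2s s])
    qed
  qed
qed


end
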